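(* For all integers $Z\ge1$, $F\ge Z+1$, $\ell\ge1$ and $x\in\{0,1,\dots,\lceil\frac{Z+1}{F-Z}\rceil-1\}$, $$s\!\left(F,\ \ell\binom{F}{Z}-x,\ Z\right)=\frac{\ell\binom{F}{Z}(F-Z)}{Z+1}=\ell\binom{F}{Z+1},$$ and an RPDA$\left(F,\ell\binom{F}{Z}-x,Z\right)$ exists.
   Context: A placement delivery array $S$-PDA$(F,K,Z)$ is an $F\times K$ array $R=(r_{j,k})$, $1\le j\le F$, $1\le k\le K$, over a finite set $S$ such that: (1) each cell is either empty or contains an element of $S$; (2) each column contains exactly $Z$ empty cells; (3) each element of $S$ occurs at most once in each row and at most once in each column; (4) if two distinct nonempty cells satisfy $r_{j_1,k_1}=r_{j_2,k_2}=t\in S$, then the cells $r_{j_1,k_2}$ and $r_{j_2,k_1}$ are empty. For integers $F,K\ge1$, $0\le Z\le F$, define $s(F,K,Z)=\min\{|S| : \text{there exists an } S\text{-PDA}(F,K,Z)\}$. An RPDA$(F,K,Z)$ (restricted PDA) is an $S$-PDA$(F,K,Z)$ with $|S|=\left\lceil\frac{K(F-Z)}{Z+1}\right\rceil$. *)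

theory Defs
  imports Complex_Main
begin

text \<open>An F x K array over a symbol set S is modelled as a function
  r :: nat => nat => 'a option, with rows j < F and columns k < K (0-based);
  None is an empty cell, Some t is a cell containing t.\<close>

definition is_PDA :: "'a set \<Rightarrow> nat \<Rightarrow> nat \<Rightarrow> nat \<Rightarrow> (nat \<Rightarrow> nat \<Rightarrow> 'a option) \<Rightarrow> bool" where
  "is_PDA S F K Z r \<longleftrightarrow>
     finite S \<and>
     (\<forall>j<F. \<forall>k<K. \<forall>t. r j k = Some t \<longrightarrow> t \<in> S) \<and>
     (\<forall>k<K. card {j. j < F \<and> r j k = None} = Z) \<and>
     (\<forall>j<F. \<forall>k1<K. \<forall>k2<K. \<forall>t. r j k1 = Some t \<and> r j k2 = Some t \<longrightarrow> k1 = k2) \<and>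
     (\<forall>k<K. \<forall>j1<F. \<forall>j2<F. \<forall>t. r j1 k = Some t \<and> r j2 k = Some t \<longrightarrow> j1 = j2) \<and>
     (\<forall>j1<F. \<forall>j2<F. \<forall>k1<K. \<forall>k2<K. \<forall>t.
        (j1, k1) \<noteq> (j2, k2) \<and> r j1 k1 = Some t \<and> r j2 k2 = Some t \<longrightarrow>
        r j1 k2 = None \<and> r j2 k1 = None)"

text \<open>s(F,K,Z): minimal size of a symbol set admitting a PDA. Symbols are taken
  from nat, which is no loss of generality since any finite set is in bijection
  with a set of naturals.\<close>

definition s_PDA :: "nat \<Rightarrow> nat \<Rightarrow> nat \<Rightarrow> nat" where
  "s_PDA F K Z = (LEAST n. \<exists>(S :: nat set) r. is_PDA S F K Z r \<and> card S = n)"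

definition RPDA_exists :: "nat \<Rightarrow> nat \<Rightarrow> nat \<Rightarrow> bool" where
  "RPDA_exists F K Z \<longleftrightarrow>
     (\<exists>(S :: nat set) r. is_PDA S F K Z r \<and>
        int (card S) = \<lceil>real (K * (F - Z)) / real (Z + 1)\<rceil>)"

end

theory Submission
  imports Defs
begin

lemma choose_id:
  assumes "F \<ge> 1"
  shows "(F choose Z) * (F - Z) = (F choose (Z + 1)) * (Z + 1)"
proof -
  have "(F - Z) * (F choose Z) = F * ((F - 1) choose Z)" by (rule binomial_absorb_comp)
  also have "\<dots> = (F choose Suc Z) * Suc Z"
    using Suc_times_binomial_eq[of "F - 1" Z] assms by simp
  finally show ?thesis by (simp add: mult.commute)
qed

lemma PDA_lower:
  assumes P: "is_PDA S F K Z r"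
  shows "K * (F - Z) \<le> (Z + 1) * card S"
proof -
  have fin: "finite S"
    and symS: "\<forall>j<F. \<forall>k<K. \<forall>t. r j k = Some t \<longrightarrow> t \<in> S"
    and col: "\<forall>k<K. card {j. j < F \<and> r j k = None} = Z"
    and rowc: "\<forall>j<F. \<forall>k1<K. \<forall>k2<K. \<forall>t. r j k1 = Some t \<and> r j k2 = Some t \<longrightarrow> k1 = k2"
    and c4: "\<forall>j1<F. \<forall>j2<F. \<forall>k1<K. \<forall>k2<K. \<forall>t.
        (j1, k1) \<noteq> (j2, k2) \<and> r j1 k1 = Some t \<and> r j2 k2 = Some t \<longrightarrow>
        r j1 k2 = None \<and> r j2 k1 = None"
    using P unfolding is_PDA_def by - (elim conjE; assumption)+
  define C where "C = (SIGMA k:{..<K}. {j. j < F \<and> r j k \<noteq> None})"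
  have cardk: "card {j. j < F \<and> r j k \<noteq> None} = F - Z" if "k < K" for k
  proof -
    have "{j. j < F \<and> r j k \<noteq> None} = {..<F} - {j. j < F \<and> r j k = None}" by auto
    then show ?thesis using col that
      by (simp add: card_Diff_subset subset_eq)
  qed
  have "card C = (\<Sum>k\<in>{..<K}. card {j. j < F \<and> r j k \<noteq> None})"
    unfolding C_def by (rule card_SigmaI) auto
  also have "\<dots> = K * (F - Z)" using cardk by simp
  finally have cC: "card C = K * (F - Z)" .
  define A where "A t = {(k, j). k < K \<and> j < F \<and> r j k = Some t}" for t
  have CU: "C \<subseteq> (\<Union>t\<in>S. A t)"
  proof
    fix p assume "p \<in> C"
    then obtain k j where p: "p = (k, j)" "k < K" "j < F" "r j k \<noteq> None" unfolding C_def by auto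
    then obtain t where "r j k = Some t" by auto
    then show "p \<in> (\<Union>t\<in>S. A t)" using p symS unfolding A_def by auto
  qed
  have Ale: "card (A t) \<le> Z + 1" for t
  proof (cases "A t = {}")
    case True then show ?thesis by simp
  next
    case False
    then obtain k0 j0 where p0: "(k0, j0) \<in> A t" by auto
    then have k0: "k0 < K" "j0 < F" "r j0 k0 = Some t" unfolding A_def by auto
    have fA: "finite (A t)" unfolding A_def
      by (rule finite_subset[of _ "{..<K} \<times> {..<F}"]) auto
    have inj: "inj_on snd (A t - {(k0, j0)})"
    proof (rule inj_onI)
      fix p q assume "p \<in> A t - {(k0, j0)}" "q \<in> A t - {(k0, j0)}" "snd p = snd q"
      then show "p = q" using rowc unfolding A_def by auto
    qed
    have sub: "snd ` (A t - {(k0, j0)}) \<subseteq> {j. j < F \<and> r j k0 = None}"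
    proof
      fix j assume "j \<in> snd ` (A t - {(k0, j0)})"
      then obtain p where p: "p \<in> A t - {(k0, j0)}" "j = snd p" by blast
      obtain k where kj: "(k, j) \<in> A t" "(k, j) \<noteq> (k0, j0)"
        using p by (cases p) auto
      then have "k < K" "j < F" "r j k = Some t" unfolding A_def by auto
      then have "r j k0 = None" using c4 k0 kj(2) by blast
      then show "j \<in> {j. j < F \<and> r j k0 = None}" using \<open>j < F\<close> by simp
    qed
    have "card (A t - {(k0, j0)}) = card (snd ` (A t - {(k0, j0)}))"
      using inj by (simp add: card_image)
    also have "\<dots> \<le> Z" using card_mono[OF _ sub] col k0 by simp
    finally have "card (A t - {(k0, j0)}) \<le> Z" .
    then show ?thesis using p0 fA by (simp add: card_Diff_singleton)
  qed
  have "card C \<le> card (\<Union>t\<in>S. A t)"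
    apply (rule card_mono[OF _ CU])
    using fin unfolding A_def
    by (intro finite_UN_I) (auto intro: finite_subset[of _ "{..<K} \<times> {..<F}"])
  also have "\<dots> \<le> (\<Sum>t\<in>S. card (A t))" by (rule card_UN_le[OF fin])
  also have "\<dots> \<le> (\<Sum>t\<in>S. Z + 1)" by (rule sum_mono) (rule Ale)
  finally show ?thesis using cC by (simp add: mult.commute)
qed

lemma PDA_transfer:
  assumes P: "is_PDA S F K Z r" and inj: "inj_on f S"
  shows "is_PDA (f ` S) F K Z (\<lambda>j k. map_option f (r j k))"
proof -
  have fin: "finite S"
    and symS: "\<forall>j<F. \<forall>k<K. \<forall>t. r j k = Some t \<longrightarrow> t \<in> S"
    and col: "\<forall>k<K. card {j. j < F \<and> r j k = None} = Z"
    and rowc: "\<forall>j<F. \<forall>k1<K. \<forall>k2<K. \<forall>t. r j k1 = Some t \<and> r j k2 = Some t \<longrightarrow> k1 = k2"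
    and colc: "\<forall>k<K. \<forall>j1<F. \<forall>j2<F. \<forall>t. r j1 k = Some t \<and> r j2 k = Some t \<longrightarrow> j1 = j2"
    and c4: "\<forall>j1<F. \<forall>j2<F. \<forall>k1<K. \<forall>k2<K. \<forall>t.
        (j1, k1) \<noteq> (j2, k2) \<and> r j1 k1 = Some t \<and> r j2 k2 = Some t \<longrightarrow>
        r j1 k2 = None \<and> r j2 k1 = None"
    using P unfolding is_PDA_def by - (elim conjE; assumption)+
  have key: "map_option f (r j1 k1) = Some t \<Longrightarrow> map_option f (r j2 k2) = Some t \<Longrightarrow>
     j1 < F \<Longrightarrow> j2 < F \<Longrightarrow> k1 < K \<Longrightarrow> k2 < K \<Longrightarrow>
     \<exists>u. r j1 k1 = Some u \<and> r j2 k2 = Some u" for j1 j2 k1 k2 t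
  proof -
    assume a: "map_option f (r j1 k1) = Some t" "map_option f (r j2 k2) = Some t"
      "j1 < F" "j2 < F" "k1 < K" "k2 < K"
    then obtain u1 u2 where u: "r j1 k1 = Some u1" "r j2 k2 = Some u2" "f u1 = t" "f u2 = t" by auto
    then have "u1 \<in> S" "u2 \<in> S" using symS a by auto
    then have "u1 = u2" using u inj by (auto dest: inj_onD)
    then show ?thesis using u by auto
  qed
  show ?thesis unfolding is_PDA_def
  proof (intro conjI)
    show "finite (f ` S)" using fin by simp
    show "\<forall>j<F. \<forall>k<K. \<forall>t. map_option f (r j k) = Some t \<longrightarrow> t \<in> f ` S"
      using symS by auto
    show "\<forall>k<K. card {j. j < F \<and> map_option f (r j k) = None} = Z"
      using col by simp
    show "\<forall>j<F. \<forall>k1<K. \<forall>k2<K. \<forall>t. map_option f (r j k1) = Some t \<and> map_option f (r j k2) = Some t \<longrightarrow> k1 = k2"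
      using rowc key by metis
    show "\<forall>k<K. \<forall>j1<F. \<forall>j2<F. \<forall>t. map_option f (r j1 k) = Some t \<and> map_option f (r j2 k) = Some t \<longrightarrow> j1 = j2"
      using colc key by metis
    show "\<forall>j1<F. \<forall>j2<F. \<forall>k1<K. \<forall>k2<K. \<forall>t.
        (j1, k1) \<noteq> (j2, k2) \<and> map_option f (r j1 k1) = Some t \<and> map_option f (r j2 k2) = Some t \<longrightarrow>
        map_option f (r j1 k2) = None \<and> map_option f (r j2 k1) = None"
    proof (intro allI impI)
      fix j1 j2 k1 k2 t
      assume b: "j1 < F" "j2 < F" "k1 < K" "k2 < K"
        "(j1, k1) \<noteq> (j2, k2) \<and> map_option f (r j1 k1) = Some t \<and> map_option f (r j2 k2) = Some t"
      then obtain u where "r j1 k1 = Some u" "r j2 k2 = Some u" using key by blast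
      then have "r j1 k2 = None \<and> r j2 k1 = None" using c4 b by blast
      then show "map_option f (r j1 k2) = None \<and> map_option f (r j2 k1) = None" by simp
    qed
  qed
qed

lemma ins_eq: "insert a A = insert a B \<Longrightarrow> a \<notin> A \<Longrightarrow> a \<notin> B \<Longrightarrow> A = B"
  by (metis Diff_insert_absorb)

lemma PDA_construct_gen:
  assumes ZF: "Z < F" and KK: "K \<le> l * (F choose Z)"
  shows "\<exists>(S :: (nat \<times> nat set) set) r. is_PDA S F K Z r \<and> card S = l * (F choose (Z + 1))"
proof -
  define c where "c = F choose Z"
  have c0: "c > 0" unfolding c_def using ZF by simp
  define ZS where "ZS = {A. A \<subseteq> {..<F} \<and> card A = Z}"
  have cZS: "card ZS = c" unfolding ZS_def c_def using n_subsets[of "{..<F}" Z] by simp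
  have fZS: "finite ZS" unfolding ZS_def by (rule finite_subset[of _ "Pow {..<F}"]) auto
  obtain g where g: "bij_betw g {..<c} ZS"
    using finite_same_card_bij[of "{..<c}" ZS] cZS fZS by auto
  define G where "G k = g (k mod c)" for k
  have GZS: "G k \<in> ZS" for k unfolding G_def using g c0 bij_betwE by fastforce
  have Gsub: "G k \<subseteq> {..<F}" and Gcard: "card (G k) = Z" and Gfin: "finite (G k)" for k
    using GZS[of k] unfolding ZS_def by (auto intro: finite_subset)
  have Ginj: "k1 = k2" if "k1 div c = k2 div c" "G k1 = G k2" for k1 k2
  proof -
    have "k1 mod c = k2 mod c"
      using that(2) g c0 unfolding G_def bij_betw_def by (auto dest: inj_onD)
    then show ?thesis using that(1) by (metis div_mult_mod_eq)
  qed
  define S0 where "S0 = {..<l} \<times> {B. B \<subseteq> {..<F} \<and> card B = Z + 1}"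
  have cS0: "card S0 = l * (F choose (Z + 1))"
    unfolding S0_def using n_subsets[of "{..<F}" "Z+1"] by (simp add: card_cartesian_product)
  define r0 where "r0 j k = (if j \<in> G k then None else Some (k div c, insert j (G k)))" for j k
  have "is_PDA S0 F K Z r0" unfolding is_PDA_def
  proof (intro conjI)
    show "finite S0" unfolding S0_def
      by (intro finite_cartesian_product) (auto intro: finite_subset[of _ "Pow {..<F}"])
    show "\<forall>j<F. \<forall>k<K. \<forall>t. r0 j k = Some t \<longrightarrow> t \<in> S0"
    proof (intro allI impI)
      fix j k t assume a: "j < F" "k < K" "r0 j k = Some t"
      then have jG: "j \<notin> G k" and t: "t = (k div c, insert j (G k))" unfolding r0_def
        by (auto split: if_splits)
      have "k div c < l" using a(2) KK c0 unfolding c_def by (simp add: div_less_iff_less_mult)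
      moreover have "card (insert j (G k)) = Z + 1" using jG Gfin Gcard by simp
      ultimately show "t \<in> S0" unfolding S0_def using t Gsub a(1) by auto
    qed
    show "\<forall>k<K. card {j. j < F \<and> r0 j k = None} = Z"
    proof (intro allI impI)
      fix k assume "k < K"
      have "{j. j < F \<and> r0 j k = None} = G k" unfolding r0_def using Gsub by auto
      then show "card {j. j < F \<and> r0 j k = None} = Z" using Gcard by simp
    qed
    show "\<forall>j<F. \<forall>k1<K. \<forall>k2<K. \<forall>t. r0 j k1 = Some t \<and> r0 j k2 = Some t \<longrightarrow> k1 = k2"
    proof (intro allI impI)
      fix j k1 k2 t assume a: "r0 j k1 = Some t \<and> r0 j k2 = Some t"
      then have h: "j \<notin> G k1" "j \<notin> G k2" "k1 div c = k2 div c" "insert j (G k1) = insert j (G k2)"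
        unfolding r0_def by (auto split: if_splits)
      then have "G k1 = G k2" using ins_eq[OF h(4) h(1) h(2)] by simp
      then show "k1 = k2" using Ginj \<open>k1 div c = k2 div c\<close> by blast
    qed
    show "\<forall>k<K. \<forall>j1<F. \<forall>j2<F. \<forall>t. r0 j1 k = Some t \<and> r0 j2 k = Some t \<longrightarrow> j1 = j2"
    proof (intro allI impI)
      fix k j1 j2 t assume a: "r0 j1 k = Some t \<and> r0 j2 k = Some t"
      then have "j1 \<notin> G k" "j2 \<notin> G k" "insert j1 (G k) = insert j2 (G k)"
        unfolding r0_def by (auto split: if_splits)
      then show "j1 = j2" by (metis insertI1 insertE)
    qed
    show "\<forall>j1<F. \<forall>j2<F. \<forall>k1<K. \<forall>k2<K. \<forall>t.
        (j1, k1) \<noteq> (j2, k2) \<and> r0 j1 k1 = Some t \<and> r0 j2 k2 = Some t \<longrightarrow>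
        r0 j1 k2 = None \<and> r0 j2 k1 = None"
    proof (intro allI impI)
      fix j1 j2 k1 k2 t
      assume a: "(j1, k1) \<noteq> (j2, k2) \<and> r0 j1 k1 = Some t \<and> r0 j2 k2 = Some t"
      then have h: "j1 \<notin> G k1" "j2 \<notin> G k2" "k1 div c = k2 div c"
          "insert j1 (G k1) = insert j2 (G k2)"
        unfolding r0_def by (auto split: if_splits)
      have "j1 \<noteq> j2"
      proof
        assume "j1 = j2"
        then have "G k1 = G k2" using ins_eq[of j1 "G k1" "G k2"] h by simp
        then have "k1 = k2" using Ginj h by blast
        then show False using a \<open>j1 = j2\<close> by simp
      qed
      then have "j1 \<in> G k2" "j2 \<in> G k1" using h(4) by (metis insertI1 insertE)+
      then show "r0 j1 k2 = None \<and> r0 j2 k1 = None" unfolding r0_def by simp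
    qed
  qed
  then show ?thesis using cS0 by blast
qed

lemma PDA_construct:
  assumes ZF: "Z < F" and KK: "K \<le> l * (F choose Z)"
  shows "\<exists>(S :: nat set) r. is_PDA S F K Z r \<and> card S = l * (F choose (Z + 1))"
proof -
  obtain S0 :: "(nat \<times> nat set) set" and r0 where P: "is_PDA S0 F K Z r0"
    and c: "card S0 = l * (F choose (Z + 1))"
    using PDA_construct_gen[OF assms] by blast
  have "finite S0" using P unfolding is_PDA_def by (elim conjE)
  then obtain f and n :: nat where f: "f ` S0 = {i. i < n}" "inj_on f S0"
    using finite_imp_inj_to_nat_seg by blast
  have "is_PDA (f ` S0) F K Z (\<lambda>j k. map_option f (r0 j k))"
    by (rule PDA_transfer[OF P f(2)])
  moreover have "card (f ` S0) = l * (F choose (Z + 1))" using c f(2) by (simp add: card_image)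
  ultimately show ?thesis by blast
qed

theorem mainTheorem10:
  fixes Z F l x :: nat
  assumes "Z \<ge> 1" and "F \<ge> Z + 1" and "l \<ge> 1"
    and "int x \<le> \<lceil>real (Z + 1) / real (F - Z)\<rceil> - 1"
  shows "real (s_PDA F (l * (F choose Z) - x) Z)
           = real (l * (F choose Z) * (F - Z)) / real (Z + 1)
       \<and> s_PDA F (l * (F choose Z) - x) Z = l * (F choose (Z + 1))
       \<and> RPDA_exists F (l * (F choose Z) - x) Z"
proof -
  define c where "c = F choose Z"
  define N where "N = l * (F choose (Z + 1))"
  define K where "K = l * c - x"
  define m where "m = x * (F - Z)"
  have F1: "F \<ge> 1" using assms by simp
  have hid: "c * (F - Z) = (F choose (Z + 1)) * (Z + 1)" unfolding c_def by (rule choose_id[OF F1])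
  have lcN: "l * c * (F - Z) = N * (Z + 1)" unfolding N_def using hid by (simp only: mult.assoc)
  have FZ: "F - Z > 0" using assms by simp
  have "int x + 1 \<le> \<lceil>real (Z + 1) / real (F - Z)\<rceil>" using assms(4) by simp
  then have "real x < real (Z + 1) / real (F - Z)" by (simp add: le_ceiling_iff)
  then have "real x * real (F - Z) < real (Z + 1)" using FZ by (simp add: pos_less_divide_eq)
  then have "real m < real (Z + 1)" unfolding m_def by simp
  then have mlt: "m < Z + 1" by linarith
  have Npos: "N \<ge> 1" unfolding N_def using assms by (simp add: Suc_le_eq)
  have KF: "K * (F - Z) + m = N * (Z + 1)"
  proof -
    have "K * (F - Z) = l * c * (F - Z) - m" unfolding K_def m_def by (simp add: diff_mult_distrib)
    moreover have "m \<le> N * (Z + 1)" using mlt Npos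
      by (metis add_leD2 le_add_diff_inverse2 le_trans less_imp_le_nat mult_le_mono1 mult_1)
    ultimately show ?thesis using lcN by simp
  qed
  have lower: "N \<le> card S" if P: "is_PDA S F K Z r" for S :: "nat set" and r
  proof (rule ccontr)
    assume "\<not> N \<le> card S"
    then have "Suc (card S) \<le> N" by simp
    then have "(Z + 1) * Suc (card S) \<le> (Z + 1) * N" by (rule mult_le_mono2)
    moreover have "K * (F - Z) \<le> (Z + 1) * card S" by (rule PDA_lower[OF P])
    ultimately show False using KF mlt by (simp add: algebra_simps)
  qed
  obtain S0 :: "nat set" and r0 where P0: "is_PDA S0 F K Z r0" and cS0: "card S0 = N"
    using PDA_construct[of Z F K l] assms unfolding K_def c_def N_def by auto
  have sN: "s_PDA F K Z = N" unfolding s_PDA_def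
  proof (rule Least_equality)
    show "\<exists>(S :: nat set) r. is_PDA S F K Z r \<and> card S = N" using P0 cS0 by blast
    show "\<And>y. \<exists>(S :: nat set) r. is_PDA S F K Z r \<and> card S = y \<Longrightarrow> N \<le> y"
      using lower by blast
  qed
  have r1: "real (l * c * (F - Z)) / real (Z + 1) = real N"
    using lcN by (simp add: field_simps flip: of_nat_mult)
  have "real (K * (F - Z)) = real N * real (Z + 1) - real m"
    using KF by (metis add_diff_cancel_right' of_nat_add of_nat_mult)
  then have q: "real (K * (F - Z)) / real (Z + 1) = real N - real m / real (Z + 1)"
    by (simp add: field_simps)
  have m0: "real m / real (Z + 1) < 1" using mlt by (simp add: divide_less_eq)
  have m1: "real m / real (Z + 1) \<ge> 0" by simp
  have ceil: "\<lceil>real (K * (F - Z)) / real (Z + 1)\<rceil> = int N"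
    by (rule ceiling_unique) (use q m0 m1 in auto)
  have "RPDA_exists F K Z" unfolding RPDA_exists_def using P0 cS0 ceil by auto
  then show ?thesis using sN r1 unfolding K_def c_def N_def by simp
qed

end
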